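(* Let $n\geq 3$ be odd and let $G=\langle x,y,z : x^2, y^4, z^{4n}, xyz, y^2z^{2n}\rangle$. Then $G$ has order $8n$ (and, via the corresponding $(2,4,4n)$-action, acts on a closed orientable surface of genus $n$), but this action is not gpnf: not every element of $G$ is conjugate in $G$ to a power of $x$, of $y$ or of $z$.
   Context: A gpnf-action is a faithful action of a finite group by orientation-preserving homeomorphisms on a closed orientable surface in which every element has a fixed point. For an action given by a smooth epimorphism from a Fuchsian triangle group of signature $(2,4,4n)$ sending the canonical generators to $x,y,z$, an element has a fixed point iff it is conjugate to a power of $x$, $y$ or $z$. *)

theory Defs
  imports "HOL-Algebra.Algebra"
begin

text \<open>A letter is a pair (generator, inverted?); (a, False) stands for a and
(a, True) for its inverse.\<close>

fun red_cons :: "'g \<times> bool \<Rightarrow> ('g \<times> bool) list \<Rightarrow> ('g \<times> bool) list" where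
  "red_cons a [] = [a]"
| "red_cons a (b # w) =
     (if fst a = fst b \<and> snd a \<noteq> snd b then w else a # b # w)"

definition reduce :: "('g \<times> bool) list \<Rightarrow> ('g \<times> bool) list" where
  "reduce w = foldr red_cons w []"

definition inv_word :: "('g \<times> bool) list \<Rightarrow> ('g \<times> bool) list" where
  "inv_word w = rev (map (\<lambda>(a, b). (a, \<not> b)) w)"

definition free_grp :: "('g \<times> bool) list monoid" where
  "free_grp = \<lparr> carrier = {w. reduce w = w},
                monoid.mult = (\<lambda>u v. reduce (u @ v)),
                monoid.one = [] \<rparr>"

definition normal_closure :: "('a, 'b) monoid_scheme \<Rightarrow> 'a set \<Rightarrow> 'a set" where
  "normal_closure G R = \<Inter> {N. N \<lhd> G \<and> R \<subseteq> N}"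

definition presented_group ::
  "('g \<times> bool) list set \<Rightarrow> ('g \<times> bool) list set monoid" where
  "presented_group R = free_grp Mod normal_closure free_grp (reduce ` R)"

definition pres_gen :: "('g \<times> bool) list set \<Rightarrow> 'g \<Rightarrow> ('g \<times> bool) list set" where
  "pres_gen R a = normal_closure free_grp (reduce ` R) #>\<^bsub>free_grp\<^esub> [(a, False)]"

datatype gen = Gx | Gy | Gz

definition relators_4p7 :: "nat \<Rightarrow> (gen \<times> bool) list set" where
  "relators_4p7 n =
     { replicate 2 (Gx, False),
       replicate 4 (Gy, False),
       replicate (4 * n) (Gz, False),
       [(Gx, False), (Gy, False), (Gz, False)],
       replicate 2 (Gy, False) @ replicate (2 * n) (Gz, False) }"

definition G4p7 :: "nat \<Rightarrow> (gen \<times> bool) list set monoid" where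
  "G4p7 n = presented_group (relators_4p7 n)"

definition gen4p7 :: "nat \<Rightarrow> gen \<Rightarrow> (gen \<times> bool) list set" where
  "gen4p7 n a = pres_gen (relators_4p7 n) a"

end

theory Submission
  imports Defs
begin

fun reduced :: "('g \<times> bool) list \<Rightarrow> bool" where
  "reduced [] = True"
| "reduced [a] = True"
| "reduced (a # b # w) = (\<not> (fst a = fst b \<and> snd a \<noteq> snd b) \<and> reduced (b # w))"

lemma reduced_tl: "reduced (a # w) \<Longrightarrow> reduced w"
  by (cases w) auto

lemma reduced_red_cons: "reduced w \<Longrightarrow> reduced (red_cons a w)"
  by (cases w) (auto dest: reduced_tl)

lemma red_cons_reduced_eq: "reduced (a # w) \<Longrightarrow> red_cons a w = a # w"
  by (cases w) auto

lemma reduced_foldr: "reduced r \<Longrightarrow> reduced (foldr red_cons u r)"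
  by (induction u) (auto intro: reduced_red_cons)

lemma reduce_reduced: "reduced (reduce w)"
  unfolding reduce_def by (rule reduced_foldr) simp

lemma reduce_Cons: "reduce (a # w) = red_cons a (reduce w)"
  by (simp add: reduce_def)

lemma reduce_id: "reduced w \<Longrightarrow> reduce w = w"
proof (induction w)
  case Nil then show ?case by (simp add: reduce_def)
next
  case (Cons a w)
  then show ?case using reduced_tl[OF Cons.prems]
    by (simp add: reduce_Cons red_cons_reduced_eq)
qed

lemma reduce_eq_iff: "reduce w = w \<longleftrightarrow> reduced w"
  by (metis reduce_id reduce_reduced)

lemma carrier_free: "carrier free_grp = {w. reduced w}"
  by (auto simp: free_grp_def reduce_eq_iff)

lemma mult_free: "x \<otimes>\<^bsub>free_grp\<^esub> y = reduce (x @ y)"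
  by (simp add: free_grp_def)

lemma one_free: "\<one>\<^bsub>free_grp\<^esub> = []"
  by (simp add: free_grp_def)

lemma red_cons_cancel: "reduced w \<Longrightarrow> red_cons (fst a, \<not> snd a) (red_cons a w) = w"
proof (cases w)
  case Nil then show ?thesis by (cases a) auto
next
  case (Cons b w')
  assume r: "reduced w"
  show ?thesis
  proof (cases "fst a = fst b \<and> snd a \<noteq> snd b")
    case True
    then have ab: "(fst a, \<not> snd a) = b" by (cases a; cases b) auto
    have "red_cons a w = w'" using Cons True by simp
    moreover have "red_cons b w' = b # w'"
      using r Cons red_cons_reduced_eq by blast
    ultimately show ?thesis using Cons ab by simp
  next
    case False
    then show ?thesis using Cons by (cases a; cases b) auto
  qed
qed

lemma foldr_red_cons_step:
  assumes "reduced t" "reduced r"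
  shows "foldr red_cons (red_cons a t) r = red_cons a (foldr red_cons t r)"
proof (cases t)
  case Nil then show ?thesis by simp
next
  case (Cons b t')
  show ?thesis
  proof (cases "fst a = fst b \<and> snd a \<noteq> snd b")
    case True
    have rr: "reduced (foldr red_cons t' r)" using assms by (intro reduced_foldr)
    have "a = (fst b, \<not> snd b)" using True by (cases a; cases b) auto
    then have "red_cons a (red_cons b (foldr red_cons t' r)) = foldr red_cons t' r"
      using red_cons_cancel[OF rr, of b] by simp
    then show ?thesis using Cons True by simp
  next
    case False
    then show ?thesis using Cons by auto
  qed
qed

lemma foldr_reduce_left: "reduced r \<Longrightarrow> foldr red_cons (reduce p) r = foldr red_cons p r"
proof (induction p)
  case Nil then show ?case by (simp add: reduce_def)
next
  case (Cons a p)
  then show ?case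
    by (simp add: reduce_Cons foldr_red_cons_step reduce_reduced)
qed

lemma reduce_append: "reduce (u @ v) = foldr red_cons u (reduce v)"
  by (simp add: reduce_def)

lemma reduce_reduce_left: "reduce (reduce p @ q) = reduce (p @ q)"
  by (simp add: reduce_append foldr_reduce_left reduce_reduced)

lemma reduce_reduce_right: "reduce (p @ reduce q) = reduce (p @ q)"
  by (simp add: reduce_append reduce_id reduce_reduced)

lemma inv_word_Cons: "inv_word (a # w) = inv_word w @ [(fst a, \<not> snd a)]"
  by (cases a) (simp add: inv_word_def)

lemma inv_cancel_foldr: "reduced r \<Longrightarrow> foldr red_cons (inv_word w) (foldr red_cons w r) = r"
proof (induction w arbitrary: r)
  case Nil then show ?case by (simp add: inv_word_def)
next
  case (Cons a w)
  have rr: "reduced (foldr red_cons w r)" using Cons.prems by (rule reduced_foldr)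
  have "foldr red_cons (inv_word (a # w)) (foldr red_cons (a # w) r)
      = foldr red_cons (inv_word w) (red_cons (fst a, \<not> snd a) (red_cons a (foldr red_cons w r)))"
    by (simp add: inv_word_Cons)
  also have "\<dots> = r" using red_cons_cancel[OF rr] Cons by simp
  finally show ?case .
qed

lemma group_free: "group (free_grp :: ('g \<times> bool) list monoid)"
proof (rule groupI)
  fix x y :: "('g \<times> bool) list" assume "x \<in> carrier free_grp" "y \<in> carrier free_grp"
  then show "x \<otimes>\<^bsub>free_grp\<^esub> y \<in> carrier free_grp"
    by (simp add: carrier_free mult_free reduce_reduced)
next
  show "\<one>\<^bsub>free_grp\<^esub> \<in> carrier free_grp" by (simp add: carrier_free one_free)
next
  fix x y z :: "('g \<times> bool) list" assume "x \<in> carrier free_grp" "y \<in> carrier free_grp" "z \<in> carrier free_grp"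
  then show "x \<otimes>\<^bsub>free_grp\<^esub> y \<otimes>\<^bsub>free_grp\<^esub> z = x \<otimes>\<^bsub>free_grp\<^esub> (y \<otimes>\<^bsub>free_grp\<^esub> z)"
    by (simp add: mult_free reduce_reduce_left reduce_reduce_right)
next
  fix x :: "('g \<times> bool) list" assume "x \<in> carrier free_grp"
  then show "\<one>\<^bsub>free_grp\<^esub> \<otimes>\<^bsub>free_grp\<^esub> x = x"
    by (simp add: carrier_free mult_free one_free reduce_id)
next
  fix x :: "('g \<times> bool) list" assume x: "x \<in> carrier free_grp"
  show "\<exists>y\<in>carrier free_grp. y \<otimes>\<^bsub>free_grp\<^esub> x = \<one>\<^bsub>free_grp\<^esub>"
  proof (intro bexI)
    show "reduce (inv_word x) \<in> carrier free_grp" by (simp add: carrier_free reduce_reduced)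
    have "reduce (inv_word x @ x) = []"
    proof -
      have "foldr red_cons x [] = x" using x reduce_id[of x] by (simp add: carrier_free reduce_def)
      then show ?thesis using x inv_cancel_foldr[of "[]" x]
        by (simp add: reduce_append carrier_free reduce_id)
    qed
    then show "reduce (inv_word x) \<otimes>\<^bsub>free_grp\<^esub> x = \<one>\<^bsub>free_grp\<^esub>"
      by (simp add: mult_free one_free reduce_reduce_left)
  qed
qed

definition ltr :: "('a, 'b) monoid_scheme \<Rightarrow> ('g \<Rightarrow> 'a) \<Rightarrow> 'g \<times> bool \<Rightarrow> 'a" where
  "ltr H f l = (if snd l then inv\<^bsub>H\<^esub> (f (fst l)) else f (fst l))"

definition ev :: "('a, 'b) monoid_scheme \<Rightarrow> ('g \<Rightarrow> 'a) \<Rightarrow> ('g \<times> bool) list \<Rightarrow> 'a" where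
  "ev H f w = foldr (\<lambda>l acc. ltr H f l \<otimes>\<^bsub>H\<^esub> acc) w \<one>\<^bsub>H\<^esub>"

lemma ev_Nil[simp]: "ev H f [] = \<one>\<^bsub>H\<^esub>" by (simp add: ev_def)
lemma ev_Cons[simp]: "ev H f (l # w) = ltr H f l \<otimes>\<^bsub>H\<^esub> ev H f w" by (simp add: ev_def)

context group begin

lemma ltr_closed: "(\<And>g. f g \<in> carrier G) \<Longrightarrow> ltr G f l \<in> carrier G"
  by (simp add: ltr_def)

lemma ev_closed: "(\<And>g. f g \<in> carrier G) \<Longrightarrow> ev G f w \<in> carrier G"
  by (induction w) (auto intro: ltr_closed)

lemma ev_append: "(\<And>g. f g \<in> carrier G) \<Longrightarrow> ev G f (u @ v) = ev G f u \<otimes> ev G f v"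
  by (induction u) (auto simp: m_assoc ltr_closed ev_closed)

lemma ev_red_cons: assumes "\<And>g. f g \<in> carrier G"
  shows "ev G f (red_cons a w) = ev G f (a # w)"
proof (cases w)
  case Nil then show ?thesis by simp
next
  case (Cons b w')
  show ?thesis
  proof (cases "fst a = fst b \<and> snd a \<noteq> snd b")
    case True
    have "ltr G f a \<otimes> ltr G f b = \<one>"
      using True assms by (cases a; cases b) (auto simp: ltr_def)
    then have "ltr G f a \<otimes> (ltr G f b \<otimes> ev G f w') = ev G f w'"
      using assms by (simp add: m_assoc[symmetric] ltr_closed ev_closed)
    then show ?thesis using Cons True by simp
  next
    case False then show ?thesis using Cons by auto
  qed
qed

lemma ev_reduce: "(\<And>g. f g \<in> carrier G) \<Longrightarrow> ev G f (reduce w) = ev G f w"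
  by (induction w) (simp_all add: reduce_Cons ev_red_cons, simp add: reduce_def)

lemma ev_hom: "(\<And>g. f g \<in> carrier G) \<Longrightarrow> ev G f \<in> hom free_grp G"
  by (auto simp: hom_def mult_free ev_reduce ev_append ev_closed)

end

lemma normal_closure_normal:
  fixes G (structure)
  assumes "group G" "R \<subseteq> carrier G"
  shows "normal_closure G R \<lhd> G"
proof -
  interpret group G by fact
  let ?A = "{N. N \<lhd> G \<and> R \<subseteq> N}"
  have "carrier G \<in> ?A" using normal_self assms(2) by blast
  then have ne: "?A \<noteq> {}" by blast
  have sg: "subgroup (\<Inter>?A) G"
    by (rule subgroups_Inter[OF _ ne]) (auto dest: normal_imp_subgroup)
  show ?thesis unfolding normal_closure_def
  proof (subst normal_inv_iff, intro conjI ballI)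
    show "subgroup (\<Inter>?A) G" by (rule sg)
    fix x h assume x: "x \<in> carrier G" and h: "h \<in> \<Inter>?A"
    show "x \<otimes> h \<otimes> inv x \<in> \<Inter>?A"
    proof
      fix N assume N: "N \<in> ?A"
      then have "h \<in> N" using h by blast
      then show "x \<otimes> h \<otimes> inv x \<in> N" using N x by (auto intro: normal.inv_op_closed2)
    qed
  qed
qed

lemma normal_closure_sub: "R \<subseteq> normal_closure G R"
  by (auto simp: normal_closure_def)

lemma normal_closure_least: "N \<lhd> G \<Longrightarrow> R \<subseteq> N \<Longrightarrow> normal_closure G R \<subseteq> N"
  by (auto simp: normal_closure_def)

section \<open>Generic facts on presented groups\<close>

abbreviation NC :: "('g \<times> bool) list set \<Rightarrow> ('g \<times> bool) list set" where
  "NC R \<equiv> normal_closure free_grp (reduce ` R)"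

abbreviation pr :: "('g \<times> bool) list set \<Rightarrow> ('g \<times> bool) list \<Rightarrow> ('g \<times> bool) list set" where
  "pr R w \<equiv> NC R #>\<^bsub>free_grp\<^esub> w"

lemma NC_normal: "NC R \<lhd> free_grp"
  by (rule normal_closure_normal[OF group_free]) (auto simp: carrier_free reduce_reduced)

lemma group_pres: "group (presented_group R)"
  unfolding presented_group_def by (rule normal.factorgroup_is_group[OF NC_normal])

lemma pr_hom: "pr R \<in> hom free_grp (presented_group R)"
  unfolding presented_group_def by (rule normal.r_coset_hom_Mod[OF NC_normal])

lemma carrier_pres: "carrier (presented_group R) = pr R ` carrier free_grp"
  unfolding presented_group_def FactGroup_def RCOSETS_def by auto

lemma one_pres: "\<one>\<^bsub>presented_group R\<^esub> = NC R"
  by (simp add: presented_group_def)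

lemma pres_gen_carrier: "pres_gen R a \<in> carrier (presented_group R)"
  unfolding carrier_pres pres_gen_def by (rule imageI) (simp add: carrier_free)

lemma pr_agree:
  assumes "reduced w"
  shows "pr R w = ev (presented_group R) (pres_gen R) w"
  using assms
proof (induction w)
  case Nil
  have "pr R [] = NC R"
    using subgroup.rcos_const[OF normal_imp_subgroup[OF NC_normal] group_free]
      normal_imp_subgroup[OF NC_normal] subgroup.one_closed
    by (metis one_free)
  then show ?case by (simp add: one_pres)
next
  case (Cons a w)
  interpret F: group "free_grp :: ('a \<times> bool) list monoid" by (rule group_free)
  interpret Q: group "presented_group R" by (rule group_pres)
  interpret h: group_hom free_grp "presented_group R" "pr R"
    by (simp add: group_hom_def group_hom_axioms_def pr_hom F.group_axioms Q.group_axioms)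
  have rw: "reduced w" using Cons.prems by (rule reduced_tl)
  have eq: "a # w = [a] \<otimes>\<^bsub>free_grp\<^esub> w"
    using Cons.prems rw by (simp add: mult_free reduce_Cons reduce_id red_cons_reduced_eq)
  have ca: "[a] \<in> carrier free_grp" "w \<in> carrier free_grp" "[(fst a, False)] \<in> carrier free_grp"
    using rw by (auto simp: carrier_free)
  have la: "pr R [a] = ltr (presented_group R) (pres_gen R) a"
  proof (cases "snd a")
    case False then show ?thesis by (cases a) (simp add: ltr_def pres_gen_def)
  next
    case True
    have "[a] \<otimes>\<^bsub>free_grp\<^esub> [(fst a, False)] = \<one>\<^bsub>free_grp\<^esub>"
      using True by (cases a) (simp add: mult_free one_free reduce_def)
    then have "[a] = inv\<^bsub>free_grp\<^esub> [(fst a, False)]"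
      using ca F.inv_equality by (metis F.inv_char)
    then show ?thesis using True ca
      by (simp add: ltr_def pres_gen_def h.hom_inv)
  qed
  have "pr R (a # w) = pr R [a] \<otimes>\<^bsub>presented_group R\<^esub> pr R w"
    using eq ca by (simp add: h.hom_mult)
  then show ?case
    using Cons.IH[OF rw] la by simp
qed

lemma pres_gen_closed: "pres_gen R g \<in> carrier (presented_group R)"
  by (rule pres_gen_carrier)

lemma ev_pres_closed: "ev (presented_group R) (pres_gen R) w \<in> carrier (presented_group R)"
  by (rule group.ev_closed[OF group_pres pres_gen_closed])

lemma carrier_pres_ev: "carrier (presented_group R) = range (ev (presented_group R) (pres_gen R))"
proof -
  have "x \<in> range (ev (presented_group R) (pres_gen R))" if x: "x \<in> carrier (presented_group R)" for x
  proof -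
    obtain w where w: "w \<in> carrier free_grp" "x = pr R w" using x unfolding carrier_pres by (rule imageE)
    then have "x = ev (presented_group R) (pres_gen R) w" by (simp add: pr_agree carrier_free)
    then show ?thesis by blast
  qed
  then show ?thesis using ev_pres_closed by blast
qed

lemma ev_relator:
  assumes "r \<in> R"
  shows "ev (presented_group R) (pres_gen R) r = \<one>\<^bsub>presented_group R\<^esub>"
proof -
  have "ev (presented_group R) (pres_gen R) r = ev (presented_group R) (pres_gen R) (reduce r)"
    by (simp add: group.ev_reduce[OF group_pres pres_gen_closed])
  also have "\<dots> = pr R (reduce r)" by (simp add: pr_agree reduce_reduced)
  also have "\<dots> = NC R"
  proof -
    have "reduce r \<in> NC R" using normal_closure_sub[of "reduce ` R" free_grp] assms by (meson image_subset_iff)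
    then show ?thesis by (rule subgroup.rcos_const[OF normal_imp_subgroup[OF NC_normal] group_free])
  qed
  finally show ?thesis by (simp add: one_pres)
qed

text \<open>Any assignment satisfying the relators factors through the presented group.\<close>

lemma ev_factor:
  assumes H: "group H" and f: "\<And>g. f g \<in> carrier H"
    and rel: "\<And>r. r \<in> R \<Longrightarrow> ev H f r = \<one>\<^bsub>H\<^esub>"
    and eq: "ev (presented_group R) (pres_gen R) u = ev (presented_group R) (pres_gen R) v"
  shows "ev H f u = ev H f v"
proof -
  interpret F: group "free_grp :: ('a \<times> bool) list monoid" by (rule group_free)
  interpret H: group H by (rule H)
  interpret h: group_hom free_grp H "ev H f"
    by (simp add: group_hom_def group_hom_axioms_def H.ev_hom f group_free H.group_axioms)
  have "NC R \<subseteq> kernel free_grp H (ev H f)"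
    by (rule normal_closure_least[OF h.normal_kernel])
      (auto simp: kernel_def carrier_free reduce_reduced H.ev_reduce f rel)
  have u: "reduce u \<in> carrier free_grp" "reduce v \<in> carrier free_grp"
    by (auto simp: carrier_free reduce_reduced)
  have e: "pr R (reduce u) = pr R (reduce v)"
    using eq by (simp add: pr_agree reduce_reduced group.ev_reduce[OF group_pres pres_gen_closed])
  have "reduce u \<in> pr R (reduce u)"
    by (rule group.rcos_self[OF group_free u(1) normal_imp_subgroup[OF NC_normal]])
  then have "reduce u \<in> pr R (reduce v)" by (simp only: e)
  then have "reduce u \<otimes>\<^bsub>free_grp\<^esub> inv\<^bsub>free_grp\<^esub> reduce v \<in> NC R"
    by (rule subgroup.rcos_module_imp[OF normal_imp_subgroup[OF NC_normal] group_free u(2)])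
  then have k: "ev H f (reduce u \<otimes>\<^bsub>free_grp\<^esub> inv\<^bsub>free_grp\<^esub> reduce v) = \<one>\<^bsub>H\<^esub>"
    using \<open>NC R \<subseteq> _\<close> by (auto simp: kernel_def)
  have c: "ev H f (reduce u) \<in> carrier H" "ev H f (reduce v) \<in> carrier H"
    by (auto intro: H.ev_closed f)
  have "ev H f (reduce u) \<otimes>\<^bsub>H\<^esub> inv\<^bsub>H\<^esub> ev H f (reduce v) = \<one>\<^bsub>H\<^esub>"
    using k u by (simp add: h.hom_mult h.hom_inv)
  then have "ev H f (reduce u) = ev H f (reduce v)"
    using c by (metis H.inv_closed H.inv_equality H.inv_inv)
  then show ?thesis by (simp add: H.ev_reduce f)
qed

locale rel47 = group G for G (structure) +
  fixes Xe Ye Ze :: 'a and n :: nat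
  assumes XYZc: "Xe \<in> carrier G" "Ye \<in> carrier G" "Ze \<in> carrier G"
    and n1: "n \<ge> 1"
    and r1: "Xe \<otimes> Xe = \<one>" and r2: "Ye [^] (4::nat) = \<one>" and r3: "Ze [^] (4*n) = \<one>"
    and r4: "Xe \<otimes> (Ye \<otimes> Ze) = \<one>" and r5: "Ye [^] (2::nat) \<otimes> Ze [^] (2*n) = \<one>"
begin

lemma pow_comm1: "x \<in> carrier G \<Longrightarrow> x \<otimes> x [^] (k::nat) = x [^] k \<otimes> x"
  by (metis nat_pow_Suc nat_pow_Suc2)

lemma Xc[simp]: "Xe \<in> carrier G" and Yc[simp]: "Ye \<in> carrier G" and Zc[simp]: "Ze \<in> carrier G"
  using XYZc by auto

lemma X_eq: "Xe = Ye \<otimes> Ze"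
proof -
  have "inv (Ye \<otimes> Ze) = Xe" using r4 by (intro inv_equality) auto
  moreover have "inv Xe = Xe" using r1 by (intro inv_equality) auto
  ultimately show ?thesis by (metis Yc Zc inv_inv m_closed)
qed

lemma Y2: "Ye [^] (2::nat) = Ze [^] (2*n)"
proof -
  have "inv (Ze [^] (2*n)) = Ye [^] (2::nat)" using r5 by (intro inv_equality) auto
  moreover have "Ze [^] (2*n) \<otimes> Ze [^] (2*n) = \<one>"
    using r3 by (simp add: nat_pow_mult)
  then have "inv (Ze [^] (2*n)) = Ze [^] (2*n)" by (intro inv_equality) auto
  ultimately show ?thesis by simp
qed

lemma ZY: "Ze \<otimes> Ye = Ye \<otimes> Ze [^] (2*n - 1)"
proof -
  have "Ye \<otimes> (Ze \<otimes> Ye \<otimes> Ze) = \<one>" using r1 by (simp add: X_eq m_assoc)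
  then have a: "Ze \<otimes> Ye \<otimes> Ze = inv Ye" by (metis Yc Zc inv_equality m_closed inv_inv inv_closed)
  have "Ye [^] (3::nat) \<otimes> Ye = \<one>" using r2 by (simp add: nat_pow_Suc[symmetric] numeral_eq_Suc del: nat_pow_Suc)
  then have "inv Ye = Ye [^] (3::nat)" by (intro inv_equality) auto
  also have "\<dots> = Ye \<otimes> Ye [^] (2::nat)" by (simp add: numeral_eq_Suc nat_pow_Suc2 m_assoc)
  also have "\<dots> = Ye \<otimes> (Ze [^] (2*n - 1) \<otimes> Ze)" using n1
    by (simp add: Y2 nat_pow_Suc[symmetric] del: nat_pow_Suc)
  finally have "Ze \<otimes> Ye \<otimes> Ze = Ye \<otimes> Ze [^] (2*n - 1) \<otimes> Ze" using a by (simp add: m_assoc)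
  then show ?thesis by (metis Yc Zc m_closed nat_pow_closed r_cancel)
qed

lemma ZaY: "Ze [^] a \<otimes> Ye = Ye \<otimes> Ze [^] (a * (2*n - 1))"
proof (induction a)
  case 0 then show ?case by simp
next
  case (Suc a)
  have "Ze [^] Suc a \<otimes> Ye = Ze [^] a \<otimes> (Ze \<otimes> Ye)" by (simp add: nat_pow_Suc2 m_assoc)
  also have "\<dots> = Ze [^] a \<otimes> Ye \<otimes> Ze [^] (2*n - 1)" by (simp add: ZY m_assoc)
  also have "\<dots> = Ye \<otimes> Ze [^] (a * (2*n - 1)) \<otimes> Ze [^] (2*n - 1)" by (simp add: Suc)
  also have "\<dots> = Ye \<otimes> Ze [^] (Suc a * (2*n - 1))" by (simp add: m_assoc nat_pow_mult add.commute)
  finally show ?case .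
qed

lemma Zmod: "Ze [^] a = Ze [^] (a mod (4*n))"
proof -
  have "Ze [^] (4*n*(a div (4*n))) \<otimes> Ze [^] (a mod (4*n)) = Ze [^] (4*n*(a div (4*n)) + a mod (4*n))"
    by (simp add: nat_pow_mult)
  also have "\<dots> = Ze [^] a" by simp
  finally have "Ze [^] a = (Ze [^] (4*n)) [^] (a div (4*n)) \<otimes> Ze [^] (a mod (4*n))"
    by (simp add: nat_pow_pow)
  also have "\<dots> = Ze [^] (a mod (4*n))" by (simp add: r3)
  finally show ?thesis .
qed

definition S :: "'a set" where
  "S = (\<lambda>(e, a). Ye [^] e \<otimes> Ze [^] a) ` ({..<2::nat} \<times> {..<4*n})"

lemma S_carrier: "S \<subseteq> carrier G"
  by (auto simp: S_def)

lemma in_S: "(e::nat) < 2 \<Longrightarrow> Ye [^] e \<otimes> Ze [^] (a::nat) \<in> S"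
  unfolding S_def
  by (rule image_eqI[where x="(e, a mod (4*n))"]) (use n1 in \<open>auto simp: Zmod[of a]\<close>)

lemma one_S: "\<one> \<in> S"
  using in_S[of 0 0] by (simp del: One_nat_def)

lemma Y_S: assumes "s \<in> S" shows "Ye \<otimes> s \<in> S"
proof -
  obtain e a :: nat where s: "s = Ye [^] e \<otimes> Ze [^] a" "e < 2" using assms by (auto simp: S_def)
  show ?thesis
  proof (cases "e = 0")
    case True then show ?thesis using s in_S[of 1 a] by simp
  next
    case False
    then have "e = 1" using s by simp
    then have "Ye \<otimes> s = Ye [^] (2::nat) \<otimes> Ze [^] a" using s
      by (simp add: m_assoc[symmetric] numeral_eq_Suc nat_pow_Suc2 del: One_nat_def)
    also have "\<dots> = Ye [^] (0::nat) \<otimes> Ze [^] (2*n + a)" by (simp add: Y2 nat_pow_mult)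
    finally show ?thesis using in_S[of 0 "2*n+a"] by simp
  qed
qed

lemma Z_S: assumes "s \<in> S" shows "Ze \<otimes> s \<in> S"
proof -
  obtain e a :: nat where s: "s = Ye [^] e \<otimes> Ze [^] a" "e < 2" using assms by (auto simp: S_def)
  show ?thesis
  proof (cases "e = 0")
    case True
    then have "Ze \<otimes> s = Ze [^] (Suc a)" using s by (simp add: pow_comm1)
    then show ?thesis using in_S[of 0 "Suc a"] by simp
  next
    case False
    then have "e = 1" using s by simp
    then have "Ze \<otimes> s = (Ze \<otimes> Ye) \<otimes> Ze [^] a" using s by (simp add: m_assoc)
    also have "\<dots> = Ye [^] (1::nat) \<otimes> Ze [^] (2*n - 1 + a)" by (simp add: ZY m_assoc nat_pow_mult)
    finally show ?thesis using in_S[of 1 "2*n - 1 + a"] by simp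
  qed
qed

lemma Zpow_S: "s \<in> S \<Longrightarrow> Ze [^] (k::nat) \<otimes> s \<in> S"
proof (induction k)
  case 0 then show ?case using S_carrier by auto
next
  case (Suc k)
  have "Ze [^] Suc k \<otimes> s = Ze \<otimes> (Ze [^] k \<otimes> s)"
  proof -
    have sc: "s \<in> carrier G" using Suc.prems S_carrier by auto
    then show ?thesis by (simp add: m_assoc[symmetric] pow_comm1)
  qed
  then show ?case using Suc Z_S by simp
qed

lemma Ypow_S: "s \<in> S \<Longrightarrow> Ye [^] (k::nat) \<otimes> s \<in> S"
proof (induction k)
  case 0 then show ?case using S_carrier by auto
next
  case (Suc k)
  have "Ye [^] Suc k \<otimes> s = Ye \<otimes> (Ye [^] k \<otimes> s)"
  proof -
    have sc: "s \<in> carrier G" using Suc.prems S_carrier by auto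
    then show ?thesis by (simp add: m_assoc[symmetric] pow_comm1)
  qed
  then show ?case using Suc Y_S by simp
qed

lemma invY: "inv Ye = Ye [^] (3::nat)"
  using r2 by (intro inv_equality) (auto simp: nat_pow_Suc[symmetric] numeral_eq_Suc simp del: nat_pow_Suc)

lemma invZ: "inv Ze = Ze [^] (4*n - 1)"
proof -
  have "Ze [^] (4*n - 1) \<otimes> Ze = \<one>" using r3 n1 by (simp add: nat_pow_Suc[symmetric] del: nat_pow_Suc)
  then show ?thesis by (intro inv_equality) auto
qed

lemma invX: "inv Xe = Xe"
  using r1 by (intro inv_equality) auto

lemma X_S: "s \<in> S \<Longrightarrow> Xe \<otimes> s \<in> S"
  using S_carrier by (auto simp: X_eq m_assoc Y_S Z_S)

end

definition Aff :: "int \<Rightarrow> int \<Rightarrow> int \<Rightarrow> int \<Rightarrow> int" where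
  "Aff m u v = (\<lambda>t\<in>{0..<m}. (u * t + v) mod m)"

lemma Aff_cong:
  assumes "m dvd (u - u')" "m dvd (v - v')"
  shows "Aff m u v = Aff m u' v'"
proof -
  have "(u * t + v) mod m = (u' * t + v') mod m" for t
  proof -
    have e: "u * t + v - (u' * t + v') = (u - u') * t + (v - v')" by (simp add: algebra_simps)
    have d: "m dvd (u - u') * t + (v - v')" using assms by simp
    have "m dvd (u * t + v - (u' * t + v'))" by (subst e) (rule d)
    then show ?thesis by (simp add: mod_eq_dvd_iff)
  qed
  then show ?thesis by (simp add: Aff_def)
qed

lemma Aff_Bij:
  assumes m: "m > 0" and w: "m dvd (w * u - 1)"
  shows "Aff m u v \<in> Bij {0..<m}"
proof -
  let ?S = "{0..<m}"
  have into: "Aff m u v ` ?S \<subseteq> ?S" using m by (auto simp: Aff_def)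
  have inj: "inj_on (Aff m u v) ?S"
  proof (rule inj_onI)
    fix t t' assume t: "t \<in> ?S" "t' \<in> ?S" and eq: "Aff m u v t = Aff m u v t'"
    then have "(u * t + v) mod m = (u * t' + v) mod m" by (simp add: Aff_def)
    then have "m dvd (u * t + v - (u * t' + v))" by (simp add: mod_eq_dvd_iff)
    then have "m dvd u * (t - t')" by (simp add: algebra_simps)
    then have "m dvd w * (u * (t - t'))" by simp
    moreover have "m dvd (w * u - 1) * (t - t')" using w by simp
    ultimately have "m dvd w * (u * (t - t')) - (w * u - 1) * (t - t')" by (rule dvd_diff)
    moreover have "w * (u * (t - t')) - (w * u - 1) * (t - t') = t - t'" by (simp add: algebra_simps)
    ultimately have "m dvd (t - t')" by simp
    then have "t mod m = t' mod m" by (simp add: mod_eq_dvd_iff)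
    then show "t = t'" using t by simp
  qed
  have "Aff m u v ` ?S = ?S" by (rule endo_inj_surj) (use into inj in auto)
  then have "bij_betw (Aff m u v) ?S ?S" using inj by (simp add: bij_betw_def)
  then show ?thesis by (simp add: Bij_def Aff_def)
qed

lemma Aff_mult:
  assumes m: "m > 0" and B: "Aff m u1 v1 \<in> Bij {0..<m}" "Aff m u2 v2 \<in> Bij {0..<m}"
  shows "Aff m u1 v1 \<otimes>\<^bsub>BijGroup {0..<m}\<^esub> Aff m u2 v2 = Aff m (u1 * u2) (u1 * v2 + v1)"
proof -
  have "(u1 * ((u2 * t + v2) mod m) + v1) mod m = (u1 * u2 * t + (u1 * v2 + v1)) mod m" for t
  proof -
    have "(u1 * ((u2 * t + v2) mod m) + v1) mod m = (u1 * (u2 * t + v2) + v1) mod m"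
      by (metis mod_add_left_eq mod_mult_right_eq)
    then show ?thesis by (simp add: algebra_simps)
  qed
  moreover have "(u2 * t + v2) mod m \<in> {0..<m}" for t using m by simp
  ultimately show ?thesis using B
    by (auto simp: BijGroup_def compose_def Aff_def fun_eq_iff)
qed

lemma Aff_one:
  assumes "m > 0"
  shows "\<one>\<^bsub>BijGroup {0..<m}\<^esub> = Aff m 1 0"
  using assms by (auto simp: BijGroup_def Aff_def fun_eq_iff)

lemma Aff_eqD:
  assumes m: "m > 1" and eq: "Aff m u v = Aff m u' v'"
  shows "m dvd (v - v')" "m dvd (u + v - (u' + v'))"
proof -
  have "Aff m u v 0 = Aff m u' v' 0" "Aff m u v 1 = Aff m u' v' 1" using eq by auto
  then have "v mod m = v' mod m" "(u + v) mod m = (u' + v') mod m"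
    using m by (auto simp: Aff_def)
  then show "m dvd (v - v')" "m dvd (u + v - (u' + v'))" by (simp_all add: mod_eq_dvd_iff)
qed

context group begin

lemma pow_comm1': "x \<in> carrier G \<Longrightarrow> x \<otimes> x [^] (k::nat) = x [^] k \<otimes> x"
  by (metis nat_pow_Suc nat_pow_Suc2)

lemma pow2: "x \<in> carrier G \<Longrightarrow> x [^] (2::nat) = x \<otimes> x"
  by (simp add: numeral_eq_Suc)

lemma ev_rep: "(\<And>g. f g \<in> carrier G) \<Longrightarrow> ev G f (replicate k (g, False) @ w) = f g [^] k \<otimes> ev G f w"
proof (induction k)
  case 0 then show ?case by (simp add: ev_closed)
next
  case (Suc k)
  then show ?case by (simp add: ltr_def m_assoc[symmetric] pow_comm1' ev_closed)
qed

lemma ev_rep1: "(\<And>g. f g \<in> carrier G) \<Longrightarrow> ev G f (replicate k (g, False)) = f g [^] k"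
  using ev_rep[of f k g "[]"] by simp

lemma rel_ok:
  assumes f: "\<And>g. f g \<in> carrier G"
    and "f Gx [^] (2::nat) = \<one>" "f Gy [^] (4::nat) = \<one>" "f Gz [^] (4*n) = \<one>"
    "f Gx \<otimes> (f Gy \<otimes> f Gz) = \<one>" "f Gy [^] (2::nat) \<otimes> f Gz [^] (2*n) = \<one>"
    and "r \<in> relators_4p7 n"
  shows "ev G f r = \<one>"
  using assms by (auto simp: relators_4p7_def ev_rep ev_rep1 ltr_def)

end

lemma (in comm_group) conj_triv: "a \<in> carrier G \<Longrightarrow> b \<in> carrier G \<Longrightarrow> a \<otimes> b \<otimes> inv a = b"
  by (simp add: m_comm[of a b] m_assoc)

definition fB :: "nat \<Rightarrow> gen \<Rightarrow> int \<Rightarrow> int" where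
  "fB n g = (case g of Gx \<Rightarrow> Aff (4 * int n) (2 * int n - 1) (2 * int n)
     | Gy \<Rightarrow> Aff (4 * int n) (2 * int n - 1) 1 | Gz \<Rightarrow> Aff (4 * int n) 1 1)"

definition f1 :: "gen \<Rightarrow> int" where
  "f1 g = (case g of Gx \<Rightarrow> 2 | Gy \<Rightarrow> 1 | Gz \<Rightarrow> 1)"

definition f2 :: "gen \<Rightarrow> int" where
  "f2 g = (case g of Gx \<Rightarrow> 1 | Gy \<Rightarrow> 1 | Gz \<Rightarrow> 0)"

lemma dvd_sq: "4 * int n dvd (2 * int n - 1) * (2 * int n - 1) - 1"
proof -
  have "(2 * int n - 1) * (2 * int n - 1) - 1 = 4 * int n * (int n - 1)" by (simp add: algebra_simps)
  then show ?thesis by simp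
qed

context
  fixes n :: nat
  assumes n3: "n \<ge> 3"
begin

lemma m_pos: "(4 * int n) > 1" using n3 by simp

lemma Bij_u1: "Aff (4 * int n) 1 v \<in> Bij {0..<4 * int n}"
  by (rule Aff_Bij[where w = 1]) (use m_pos in auto)

lemma Bij_u2: "Aff (4 * int n) (2 * int n - 1) v \<in> Bij {0..<4 * int n}"
  by (rule Aff_Bij[where w = "2 * int n - 1"]) (use m_pos dvd_sq in auto)

lemma fB_closed: "fB n g \<in> carrier (BijGroup {0..<4 * int n})"
  by (cases g) (auto simp: fB_def BijGroup_def Bij_u1 Bij_u2)

lemma mulB: "Aff (4 * int n) u1 v1 \<in> Bij {0..<4 * int n} \<Longrightarrow> Aff (4 * int n) u2 v2 \<in> Bij {0..<4 * int n} \<Longrightarrow>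
   Aff (4 * int n) u1 v1 \<otimes>\<^bsub>BijGroup {0..<4 * int n}\<^esub> Aff (4 * int n) u2 v2 = Aff (4 * int n) (u1 * u2) (u1 * v2 + v1)"
  by (rule Aff_mult) (use m_pos in auto)

lemma oneB: "\<one>\<^bsub>BijGroup {0..<4 * int n}\<^esub> = Aff (4 * int n) 1 0"
  by (rule Aff_one) (use m_pos in auto)

lemma powB: "Aff (4 * int n) 1 v [^]\<^bsub>BijGroup {0..<4 * int n}\<^esub> (k::nat) = Aff (4 * int n) 1 (int k * v)"
proof (induction k)
  case 0 then show ?case by (simp add: oneB)
next
  case (Suc k)
  have "Aff (4 * int n) 1 (int k * v) \<otimes>\<^bsub>BijGroup {0..<4 * int n}\<^esub> Aff (4 * int n) 1 v = Aff (4 * int n) (1 * 1) (1 * v + int k * v)"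
    by (rule mulB[OF Bij_u1 Bij_u1])
  then show ?case using Suc by (simp add: algebra_simps)
qed

lemma XB: "fB n Gx \<otimes>\<^bsub>BijGroup {0..<4 * int n}\<^esub> fB n Gx = \<one>\<^bsub>BijGroup {0..<4 * int n}\<^esub>"
proof -
  have "fB n Gx \<otimes>\<^bsub>BijGroup {0..<4 * int n}\<^esub> fB n Gx
     = Aff (4 * int n) ((2 * int n - 1) * (2 * int n - 1)) ((2 * int n - 1) * (2 * int n) + 2 * int n)"
    by (simp add: fB_def mulB Bij_u2)
  also have "\<dots> = Aff (4 * int n) 1 0"
  proof (rule Aff_cong)
    show "4 * int n dvd (2 * int n - 1) * (2 * int n - 1) - 1" by (rule dvd_sq)
    have "(2 * int n - 1) * (2 * int n) + 2 * int n - 0 = 4 * int n * int n" by (simp add: algebra_simps)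
    then show "4 * int n dvd (2 * int n - 1) * (2 * int n) + 2 * int n - 0" by simp
  qed
  finally show ?thesis by (simp add: oneB)
qed

lemma Y2B: "fB n Gy [^]\<^bsub>BijGroup {0..<4 * int n}\<^esub> (2::nat) = Aff (4 * int n) 1 (2 * int n)"
proof -
  have "fB n Gy [^]\<^bsub>BijGroup {0..<4 * int n}\<^esub> (2::nat) = fB n Gy \<otimes>\<^bsub>BijGroup {0..<4 * int n}\<^esub> fB n Gy"
    by (rule group.pow2[OF group_BijGroup fB_closed])
  also have "\<dots> = Aff (4 * int n) ((2 * int n - 1) * (2 * int n - 1)) ((2 * int n - 1) * 1 + 1)"
    by (simp add: fB_def mulB Bij_u2)
  also have "\<dots> = Aff (4 * int n) 1 (2 * int n)"
    by (rule Aff_cong) (use dvd_sq in auto)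
  finally show ?thesis .
qed

lemma relB: "r \<in> relators_4p7 n \<Longrightarrow> ev (BijGroup {0..<4 * int n}) (fB n) r = \<one>\<^bsub>BijGroup {0..<4 * int n}\<^esub>"
proof (rule group.rel_ok[OF group_BijGroup fB_closed])
  interpret B: group "BijGroup {0..<4 * int n}" by (rule group_BijGroup)
  show "fB n Gx [^]\<^bsub>BijGroup {0..<4 * int n}\<^esub> (2::nat) = \<one>\<^bsub>BijGroup {0..<4 * int n}\<^esub>"
    using XB fB_closed by (simp add: B.pow2)
  have "fB n Gy [^]\<^bsub>BijGroup {0..<4 * int n}\<^esub> (4::nat)
      = fB n Gy [^]\<^bsub>BijGroup {0..<4 * int n}\<^esub> (2::nat) \<otimes>\<^bsub>BijGroup {0..<4 * int n}\<^esub> fB n Gy [^]\<^bsub>BijGroup {0..<4 * int n}\<^esub> (2::nat)"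
    using fB_closed by (simp add: B.nat_pow_mult)
  also have "\<dots> = Aff (4 * int n) 1 (4 * int n)" by (simp add: Y2B mulB Bij_u1)
  also have "\<dots> = Aff (4 * int n) 1 0" by (rule Aff_cong) auto
  finally show "fB n Gy [^]\<^bsub>BijGroup {0..<4 * int n}\<^esub> (4::nat) = \<one>\<^bsub>BijGroup {0..<4 * int n}\<^esub>"
    by (simp add: oneB)
  have "fB n Gz [^]\<^bsub>BijGroup {0..<4 * int n}\<^esub> (4 * n) = Aff (4 * int n) 1 (4 * int n)"
    by (simp add: fB_def powB)
  also have "\<dots> = Aff (4 * int n) 1 0" by (rule Aff_cong) auto
  finally show "fB n Gz [^]\<^bsub>BijGroup {0..<4 * int n}\<^esub> (4 * n) = \<one>\<^bsub>BijGroup {0..<4 * int n}\<^esub>"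
    by (simp add: oneB)
  have "fB n Gy \<otimes>\<^bsub>BijGroup {0..<4 * int n}\<^esub> fB n Gz = Aff (4 * int n) (2 * int n - 1) (2 * int n)"
    by (simp add: fB_def mulB Bij_u1 Bij_u2)
  then have "fB n Gx \<otimes>\<^bsub>BijGroup {0..<4 * int n}\<^esub> (fB n Gy \<otimes>\<^bsub>BijGroup {0..<4 * int n}\<^esub> fB n Gz)
     = fB n Gx \<otimes>\<^bsub>BijGroup {0..<4 * int n}\<^esub> fB n Gx" by (simp add: fB_def)
  then show "fB n Gx \<otimes>\<^bsub>BijGroup {0..<4 * int n}\<^esub> (fB n Gy \<otimes>\<^bsub>BijGroup {0..<4 * int n}\<^esub> fB n Gz) = \<one>\<^bsub>BijGroup {0..<4 * int n}\<^esub>"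
    using XB by simp
  have "fB n Gy [^]\<^bsub>BijGroup {0..<4 * int n}\<^esub> (2::nat) \<otimes>\<^bsub>BijGroup {0..<4 * int n}\<^esub> fB n Gz [^]\<^bsub>BijGroup {0..<4 * int n}\<^esub> (2 * n)
      = Aff (4 * int n) 1 (4 * int n)"
    by (simp add: Y2B) (simp add: fB_def powB mulB Bij_u1)
  also have "\<dots> = Aff (4 * int n) 1 0" by (rule Aff_cong) auto
  finally show "fB n Gy [^]\<^bsub>BijGroup {0..<4 * int n}\<^esub> (2::nat) \<otimes>\<^bsub>BijGroup {0..<4 * int n}\<^esub> fB n Gz [^]\<^bsub>BijGroup {0..<4 * int n}\<^esub> (2 * n) = \<one>\<^bsub>BijGroup {0..<4 * int n}\<^esub>"
    by (simp add: oneB)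
qed

end

lemma (in group) conj_word:
  assumes f: "\<And>g. f g \<in> carrier G" and w: "w \<in> carrier free_grp"
  shows "ev G f (w \<otimes>\<^bsub>free_grp\<^esub> ([(c, False)] [^]\<^bsub>free_grp\<^esub> (k::int)) \<otimes>\<^bsub>free_grp\<^esub> inv\<^bsub>free_grp\<^esub> w)
       = ev G f w \<otimes> f c [^] k \<otimes> inv (ev G f w)"
proof -
  interpret F: group "free_grp :: ('g \<times> bool) list monoid" by (rule group_free)
  interpret h: group_hom free_grp G "ev G f"
    by (simp add: group_hom_def group_hom_axioms_def ev_hom f group_free group_axioms)
  have c: "[(c, False)] \<in> carrier free_grp" by (simp add: carrier_free)
  have "ev G f [(c, False)] = f c" using f by (simp add: ltr_def)
  then show ?thesis using c w by (simp add: h.hom_mult h.hom_int_pow h.hom_inv)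
qed

lemma f1_closed: "f1 g \<in> carrier (integer_mod_group 4)"
  by (cases g) (auto simp: f1_def carrier_integer_mod_group)

lemma f2_closed: "f2 g \<in> carrier (integer_mod_group 2)"
  by (cases g) (auto simp: f2_def carrier_integer_mod_group)

lemma rel1: assumes "odd n" "r \<in> relators_4p7 n"
  shows "ev (integer_mod_group 4) f1 r = \<one>\<^bsub>integer_mod_group 4\<^esub>"
proof (rule group.rel_ok[OF group_integer_mod_group f1_closed _ _ _ _ _ assms(2)])
  obtain j where j: "n = 2 * j + 1" using assms(1) oddE by blast
  show "(f1 Gy [^]\<^bsub>integer_mod_group 4\<^esub> (2::nat)) \<otimes>\<^bsub>integer_mod_group 4\<^esub> f1 Gz [^]\<^bsub>integer_mod_group 4\<^esub> (2 * n) = \<one>\<^bsub>integer_mod_group 4\<^esub>"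
    using j by (simp add: f1_def)
qed (auto simp: f1_def)

lemma rel2: assumes "r \<in> relators_4p7 n"
  shows "ev (integer_mod_group 2) f2 r = \<one>\<^bsub>integer_mod_group 2\<^esub>"
proof (rule group.rel_ok[OF group_integer_mod_group f2_closed _ _ _ _ _ assms])
qed (auto simp: f2_def)

lemma arith_eq: "(0::int) \<le> a \<Longrightarrow> a < m \<Longrightarrow> 0 \<le> a' \<Longrightarrow> a' < m \<Longrightarrow> m dvd a - a' \<Longrightarrow> a = a'"
  by (metis mod_eq_dvd_iff mod_pos_pos_trivial)

context
  fixes n :: nat
  assumes n3: "n \<ge> 3" and oddn: "odd n"
begin

lemma Q_rel47: "rel47 (presented_group (relators_4p7 n)) (pres_gen (relators_4p7 n) Gx)
   (pres_gen (relators_4p7 n) Gy) (pres_gen (relators_4p7 n) Gz) n"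
proof -
  interpret Q: group "presented_group (relators_4p7 n)" by (rule group_pres)
  have e: "\<And>r. r \<in> relators_4p7 n \<Longrightarrow> ev (presented_group (relators_4p7 n)) (pres_gen (relators_4p7 n)) r
     = \<one>\<^bsub>presented_group (relators_4p7 n)\<^esub>" by (rule ev_relator)
  have mem: "replicate 2 (Gx, False) \<in> relators_4p7 n" "replicate 4 (Gy, False) \<in> relators_4p7 n"
    "replicate (4 * n) (Gz, False) \<in> relators_4p7 n" "[(Gx, False), (Gy, False), (Gz, False)] \<in> relators_4p7 n"
    "replicate 2 (Gy, False) @ replicate (2 * n) (Gz, False) \<in> relators_4p7 n"
    by (simp_all add: relators_4p7_def)
  note ev = Q.ev_rep[OF pres_gen_closed] Q.ev_rep1[OF pres_gen_closed]
  show ?thesis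
    unfolding rel47_def rel47_axioms_def
  proof (intro conjI)
    show "Group.group (presented_group (relators_4p7 n))" by (rule group_pres)
    show "pres_gen (relators_4p7 n) Gx \<in> carrier (presented_group (relators_4p7 n))"
      "pres_gen (relators_4p7 n) Gy \<in> carrier (presented_group (relators_4p7 n))"
      "pres_gen (relators_4p7 n) Gz \<in> carrier (presented_group (relators_4p7 n))"
      by (rule pres_gen_closed)+
    show "1 \<le> n" using n3 by simp
    show "pres_gen (relators_4p7 n) Gx \<otimes>\<^bsub>presented_group (relators_4p7 n)\<^esub> pres_gen (relators_4p7 n) Gx = \<one>\<^bsub>presented_group (relators_4p7 n)\<^esub>"
      using e[of "replicate 2 (Gx, False)"] by (simp add: mem ev Q.pow2 pres_gen_closed)
    show "pres_gen (relators_4p7 n) Gy [^]\<^bsub>presented_group (relators_4p7 n)\<^esub> (4::nat) = \<one>\<^bsub>presented_group (relators_4p7 n)\<^esub>"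
      using e[of "replicate 4 (Gy, False)"] by (simp add: mem ev)
    show "pres_gen (relators_4p7 n) Gz [^]\<^bsub>presented_group (relators_4p7 n)\<^esub> (4 * n) = \<one>\<^bsub>presented_group (relators_4p7 n)\<^esub>"
      using e[of "replicate (4 * n) (Gz, False)"] by (simp add: mem ev)
    show "pres_gen (relators_4p7 n) Gx \<otimes>\<^bsub>presented_group (relators_4p7 n)\<^esub> (pres_gen (relators_4p7 n) Gy \<otimes>\<^bsub>presented_group (relators_4p7 n)\<^esub> pres_gen (relators_4p7 n) Gz) = \<one>\<^bsub>presented_group (relators_4p7 n)\<^esub>"
      using e[of "[(Gx, False), (Gy, False), (Gz, False)]"] by (simp add: mem ltr_def pres_gen_closed)
    show "pres_gen (relators_4p7 n) Gy [^]\<^bsub>presented_group (relators_4p7 n)\<^esub> (2::nat) \<otimes>\<^bsub>presented_group (relators_4p7 n)\<^esub> pres_gen (relators_4p7 n) Gz [^]\<^bsub>presented_group (relators_4p7 n)\<^esub> (2 * n) = \<one>\<^bsub>presented_group (relators_4p7 n)\<^esub>"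
      using e[of "replicate 2 (Gy, False) @ replicate (2 * n) (Gz, False)"] by (simp add: mem ev)
  qed
qed

end

lemma arith01:
  fixes a c N :: int
  assumes "N \<ge> 3" "4 * N dvd a - c" "4 * N dvd (1 + a) - (2 * N - 1 + c)"
  shows False
proof -
  have "4 * N dvd (a - c) - ((1 + a) - (2 * N - 1 + c))" using dvd_diff[OF assms(2) assms(3)] .
  moreover have "(a - c) - ((1 + a) - (2 * N - 1 + c)) = 2 * N - 2" by simp
  ultimately have "4 * N dvd 2 * N - 2" by simp
  then have "4 * N \<le> 2 * N - 2" using assms(1) by (intro zdvd_imp_le) auto
  then show False using assms(1) by simp
qed

lemma arith11:
  fixes a a' N :: int
  assumes "4 * N dvd ((2 * N - 1) * a + 1) - ((2 * N - 1) * a' + 1)"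
  shows "4 * N dvd a - a'"
proof -
  have "4 * N dvd (2 * N - 1) * (a - a')" using assms by (simp add: algebra_simps)
  then have "4 * N dvd (2 * N - 1) * ((2 * N - 1) * (a - a'))" by simp
  moreover have "4 * N dvd ((2 * N - 1) * (2 * N - 1) - 1) * (a - a')"
  proof -
    have "(2 * N - 1) * (2 * N - 1) - 1 = 4 * N * (N - 1)" by (simp add: algebra_simps)
    then show ?thesis by simp
  qed
  ultimately have "4 * N dvd (2 * N - 1) * ((2 * N - 1) * (a - a')) - ((2 * N - 1) * (2 * N - 1) - 1) * (a - a')"
    by (rule dvd_diff)
  moreover have "(2 * N - 1) * ((2 * N - 1) * (a - a')) - ((2 * N - 1) * (2 * N - 1) - 1) * (a - a') = a - a'"
    by (simp add: algebra_simps)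
  ultimately show ?thesis by simp
qed

context
  fixes n :: nat
  assumes n3: "n \<ge> 3" and oddn: "odd n"
begin

interpretation Q: rel47 "presented_group (relators_4p7 n)" "pres_gen (relators_4p7 n) Gx"
   "pres_gen (relators_4p7 n) Gy" "pres_gen (relators_4p7 n) Gz" n
  by (rule Q_rel47[OF n3 oddn])

abbreviation "QQ \<equiv> presented_group (relators_4p7 n)"
abbreviation "gg \<equiv> pres_gen (relators_4p7 n)"
abbreviation "BG \<equiv> BijGroup {0..<4 * int n}"

lemma VB: "(e::nat) < 2 \<Longrightarrow> ev BG (fB n) (replicate e (Gy, False) @ replicate a (Gz, False))
   = (if e = 0 then Aff (4 * int n) 1 (int a) else Aff (4 * int n) (2 * int n - 1) ((2 * int n - 1) * int a + 1))"
proof -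
  interpret B: group BG by (rule group_BijGroup)
  assume e: "e < 2"
  have z: "fB n Gz [^]\<^bsub>BG\<^esub> a = Aff (4 * int n) 1 (int a)"
    by (simp add: fB_def powB[OF n3])
  have "ev BG (fB n) (replicate e (Gy, False) @ replicate a (Gz, False)) = fB n Gy [^]\<^bsub>BG\<^esub> e \<otimes>\<^bsub>BG\<^esub> Aff (4 * int n) 1 (int a)"
    by (simp add: B.ev_rep B.ev_rep1 fB_closed[OF n3] z)
  moreover have "e = 0 \<or> e = 1" using e by auto
  moreover have "Aff (4 * int n) 1 (int a) \<in> carrier BG" by (simp add: BijGroup_def Bij_u1[OF n3])
  moreover have "Aff (4 * int n) (2 * int n - 1) 1 \<in> carrier BG" by (simp add: BijGroup_def Bij_u2[OF n3])
  ultimately show ?thesis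
    by (auto simp: fB_def mulB[OF n3] Bij_u1[OF n3] Bij_u2[OF n3])
qed

lemma nf_inj:
  fixes e e' a a' :: nat
  assumes e: "e < 2" "e' < 2" and a: "a < 4 * n" "a' < 4 * n"
    and eq: "gg Gy [^]\<^bsub>QQ\<^esub> e \<otimes>\<^bsub>QQ\<^esub> gg Gz [^]\<^bsub>QQ\<^esub> a = gg Gy [^]\<^bsub>QQ\<^esub> e' \<otimes>\<^bsub>QQ\<^esub> gg Gz [^]\<^bsub>QQ\<^esub> a'"
  shows "e = e' \<and> a = a'"
proof -
  have evQ: "ev QQ gg (replicate e (Gy, False) @ replicate a (Gz, False)) = ev QQ gg (replicate e' (Gy, False) @ replicate a' (Gz, False))"
    using eq by (simp add: Q.ev_rep Q.ev_rep1 pres_gen_closed)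
  have "ev BG (fB n) (replicate e (Gy, False) @ replicate a (Gz, False)) = ev BG (fB n) (replicate e' (Gy, False) @ replicate a' (Gz, False))"
    using ev_factor[OF group_BijGroup fB_closed[OF n3] relB[OF n3] evQ] .
  then have B: "(if e = 0 then Aff (4 * int n) 1 (int a) else Aff (4 * int n) (2 * int n - 1) ((2 * int n - 1) * int a + 1))
     = (if e' = 0 then Aff (4 * int n) 1 (int a') else Aff (4 * int n) (2 * int n - 1) ((2 * int n - 1) * int a' + 1))"
    using e by (simp add: VB)
  have m1: "4 * int n > 1" using n3 by simp
  have N3: "int n \<ge> 3" using n3 by simp
  consider "e = 0" "e' = 0" | "e = 0" "e' = 1" | "e = 1" "e' = 0" | "e = 1" "e' = 1" using e by linarith
  then show ?thesis
  proof cases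
    case 1
    then have "4 * int n dvd int a - int a'" using B Aff_eqD(1)[OF m1] by simp
    then have "int a = int a'" using a by (intro arith_eq[where m = "4 * int n"]) auto
    then show ?thesis using 1 by simp
  next
    case 2
    then have "Aff (4 * int n) 1 (int a) = Aff (4 * int n) (2 * int n - 1) ((2 * int n - 1) * int a' + 1)"
      using B by simp
    from Aff_eqD[OF m1 this] arith01[OF N3] show ?thesis by blast
  next
    case 3
    then have "Aff (4 * int n) 1 (int a') = Aff (4 * int n) (2 * int n - 1) ((2 * int n - 1) * int a + 1)"
      using B by simp
    from Aff_eqD[OF m1 this] arith01[OF N3] show ?thesis by blast
  next
    case 4
    then have "Aff (4 * int n) (2 * int n - 1) ((2 * int n - 1) * int a + 1) = Aff (4 * int n) (2 * int n - 1) ((2 * int n - 1) * int a' + 1)"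
      using B by simp
    from Aff_eqD(1)[OF m1 this] have "4 * int n dvd int a - int a'" by (rule arith11)
    then have "int a = int a'" using a by (intro arith_eq[where m = "4 * int n"]) auto
    then show ?thesis using 4 by simp
  qed
qed

lemma ev_in_S: "ev QQ gg w \<in> Q.S"
proof (induction w)
  case Nil then show ?case using Q.one_S by simp
next
  case (Cons l w)
  obtain c b where l: "l = (c, b)" by (cases l)
  have "ltr QQ gg (c, b) \<otimes>\<^bsub>QQ\<^esub> ev QQ gg w \<in> Q.S"
  proof (cases c)
    case Gx then show ?thesis using Cons.IH Q.invX Q.X_S by (cases b) (simp_all add: ltr_def)
  next
    case Gy then show ?thesis using Cons.IH Q.invY Q.Y_S Q.Ypow_S by (cases b) (simp_all add: ltr_def)
  next
    case Gz then show ?thesis using Cons.IH Q.invZ Q.Z_S Q.Zpow_S by (cases b) (simp_all add: ltr_def)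
  qed
  then show ?case using l by simp
qed

lemma carrier_S: "carrier QQ = Q.S"
proof
  show "Q.S \<subseteq> carrier QQ" by (rule Q.S_carrier)
  show "carrier QQ \<subseteq> Q.S" using ev_in_S carrier_pres_ev[of "relators_4p7 n"] by auto
qed

lemma card_S: "card Q.S = 8 * n"
proof -
  have "inj_on (\<lambda>(e, a). gg Gy [^]\<^bsub>QQ\<^esub> e \<otimes>\<^bsub>QQ\<^esub> gg Gz [^]\<^bsub>QQ\<^esub> a) ({..<2::nat} \<times> {..<4*n})"
  proof (rule inj_onI)
    fix p q assume p: "p \<in> {..<2::nat} \<times> {..<4*n}" and q: "q \<in> {..<2::nat} \<times> {..<4*n}"
      and eq: "(\<lambda>(e, a). gg Gy [^]\<^bsub>QQ\<^esub> e \<otimes>\<^bsub>QQ\<^esub> gg Gz [^]\<^bsub>QQ\<^esub> a) p = (\<lambda>(e, a). gg Gy [^]\<^bsub>QQ\<^esub> e \<otimes>\<^bsub>QQ\<^esub> gg Gz [^]\<^bsub>QQ\<^esub> a) q"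
    obtain e a e' a' where pq: "p = (e, a)" "q = (e', a')" by (cases p, cases q)
    show "p = q" using nf_inj[of e e' a a'] p q eq pq by simp
  qed
  then have "card Q.S = card ({..<2::nat} \<times> {..<4*n})"
    unfolding Q.S_def by (rule card_image)
  then show ?thesis by (simp add: card_cartesian_product)
qed

lemma order_QQ: "order QQ = 8 * n"
  by (simp add: order_def carrier_S card_S)

lemma Zpow_one: "gg Gz [^]\<^bsub>QQ\<^esub> (j::nat) = \<one>\<^bsub>QQ\<^esub> \<longleftrightarrow> 4 * n dvd j"
proof
  assume z: "gg Gz [^]\<^bsub>QQ\<^esub> j = \<one>\<^bsub>QQ\<^esub>"
  have "gg Gy [^]\<^bsub>QQ\<^esub> (0::nat) \<otimes>\<^bsub>QQ\<^esub> gg Gz [^]\<^bsub>QQ\<^esub> (j mod (4 * n))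
      = gg Gy [^]\<^bsub>QQ\<^esub> (0::nat) \<otimes>\<^bsub>QQ\<^esub> gg Gz [^]\<^bsub>QQ\<^esub> (0::nat)"
    using z Q.Zmod[of j] by simp
  then have "j mod (4 * n) = 0" using nf_inj[of 0 0 "j mod (4 * n)" 0] n3 by simp
  then show "4 * n dvd j" by auto
next
  assume "4 * n dvd j"
  then obtain k where "j = 4 * n * k" by auto
  then show "gg Gz [^]\<^bsub>QQ\<^esub> j = \<one>\<^bsub>QQ\<^esub>" by (simp add: Q.nat_pow_pow[symmetric] Q.r3)
qed

lemma ord_Z: "Q.ord (gg Gz) = 4 * n"
proof -
  have d: "Q.ord (gg Gz) dvd j \<longleftrightarrow> 4 * n dvd j" for j
    using Q.pow_eq_id[of "gg Gz" j] Zpow_one[of j] by simp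
  show ?thesis using d[of "Q.ord (gg Gz)"] d[of "4 * n"] by (simp add: dvd_antisym)
qed

lemma ord_Y: "Q.ord (gg Gy) = 4"
proof -
  have d4: "Q.ord (gg Gy) dvd 4" using Q.pow_eq_id[of "gg Gy" 4] Q.r2 by simp
  have "gg Gy [^]\<^bsub>QQ\<^esub> (2::nat) \<noteq> \<one>\<^bsub>QQ\<^esub>"
  proof
    assume "gg Gy [^]\<^bsub>QQ\<^esub> (2::nat) = \<one>\<^bsub>QQ\<^esub>"
    then have "gg Gy [^]\<^bsub>QQ\<^esub> (0::nat) \<otimes>\<^bsub>QQ\<^esub> gg Gz [^]\<^bsub>QQ\<^esub> (2 * n)
      = gg Gy [^]\<^bsub>QQ\<^esub> (0::nat) \<otimes>\<^bsub>QQ\<^esub> gg Gz [^]\<^bsub>QQ\<^esub> (0::nat)"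
      using Q.Y2 by simp
    then show False using nf_inj[of 0 0 "2 * n" 0] n3 by simp
  qed
  then have nd2: "\<not> Q.ord (gg Gy) dvd 2" using Q.pow_eq_id[of "gg Gy" 2] by simp
  have "Q.ord (gg Gy) \<le> 4" using d4 by (rule dvd_imp_le) simp
  moreover have "Q.ord (gg Gy) \<noteq> 0"
  proof
    assume z: "Q.ord (gg Gy) = 0"
    with d4 show False by simp
  qed
  ultimately have "Q.ord (gg Gy) \<in> {1, 2, 3, 4}" by auto
  then show ?thesis using d4 nd2 by auto
qed

lemma ord_X: "Q.ord (gg Gx) = 2"
proof -
  have d2: "Q.ord (gg Gx) dvd 2" using Q.pow_eq_id[of "gg Gx" 2] Q.r1 by (simp add: Q.pow2)
  have "gg Gx \<noteq> \<one>\<^bsub>QQ\<^esub>"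
  proof
    assume "gg Gx = \<one>\<^bsub>QQ\<^esub>"
    then have "gg Gy [^]\<^bsub>QQ\<^esub> (1::nat) \<otimes>\<^bsub>QQ\<^esub> gg Gz [^]\<^bsub>QQ\<^esub> (1::nat)
      = gg Gy [^]\<^bsub>QQ\<^esub> (0::nat) \<otimes>\<^bsub>QQ\<^esub> gg Gz [^]\<^bsub>QQ\<^esub> (0::nat)"
      using Q.X_eq by simp
    then show False using nf_inj[of 1 0 1 0] n3 by simp
  qed
  then have nd1: "\<not> Q.ord (gg Gx) dvd 1" using Q.pow_eq_id[of "gg Gx" 1] by simp
  have "Q.ord (gg Gx) \<le> 2" using d2 by (rule dvd_imp_le) simp
  moreover have "Q.ord (gg Gx) \<noteq> 0"
  proof
    assume z: "Q.ord (gg Gx) = 0"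
    with d2 show False by simp
  qed
  ultimately have "Q.ord (gg Gx) \<in> {1, 2}" by auto
  then show ?thesis using nd1 by auto
qed

lemma not_conj:
  "\<not> (\<exists>h \<in> carrier QQ. \<exists>s \<in> {gg Gx, gg Gy, gg Gz}. \<exists>k :: int.
      ev QQ gg [(Gy, False), (Gz, False), (Gz, False), (Gz, False)] = h \<otimes>\<^bsub>QQ\<^esub> (s [^]\<^bsub>QQ\<^esub> k) \<otimes>\<^bsub>QQ\<^esub> inv\<^bsub>QQ\<^esub> h)"
proof
  let ?gw = "[(Gy, False), (Gz, False), (Gz, False), (Gz, False)]"
  assume "\<exists>h \<in> carrier QQ. \<exists>s \<in> {gg Gx, gg Gy, gg Gz}. \<exists>k :: int.
      ev QQ gg ?gw = h \<otimes>\<^bsub>QQ\<^esub> (s [^]\<^bsub>QQ\<^esub> k) \<otimes>\<^bsub>QQ\<^esub> inv\<^bsub>QQ\<^esub> h"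
  then obtain h s and k :: int where h: "h \<in> carrier QQ" and s: "s \<in> {gg Gx, gg Gy, gg Gz}"
    and eq: "ev QQ gg ?gw = h \<otimes>\<^bsub>QQ\<^esub> (s [^]\<^bsub>QQ\<^esub> k) \<otimes>\<^bsub>QQ\<^esub> inv\<^bsub>QQ\<^esub> h" by blast
  obtain c where c: "s = gg c" using s by blast
  obtain w where w: "h = ev QQ gg w" using h carrier_pres_ev[of "relators_4p7 n"] by blast
  define w' where "w' = reduce w"
  have w'c: "w' \<in> carrier free_grp" by (simp add: w'_def carrier_free reduce_reduced)
  have hw': "h = ev QQ gg w'" using w by (simp add: w'_def Q.ev_reduce pres_gen_closed)
  let ?u = "w' \<otimes>\<^bsub>free_grp\<^esub> ([(c, False)] [^]\<^bsub>free_grp\<^esub> k) \<otimes>\<^bsub>free_grp\<^esub> inv\<^bsub>free_grp\<^esub> w'"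
  have equ: "ev QQ gg ?gw = ev QQ gg ?u"
    using eq by (simp add: Q.conj_word[OF pres_gen_closed w'c] hw' c)
  have v1: "ev (integer_mod_group 4) f1 ?gw = ev (integer_mod_group 4) f1 ?u"
    by (rule ev_factor[OF group_integer_mod_group f1_closed rel1[OF oddn] equ])
  have v2: "ev (integer_mod_group 2) f2 ?gw = ev (integer_mod_group 2) f2 ?u"
    by (rule ev_factor[OF group_integer_mod_group f2_closed rel2 equ])
  have u1: "ev (integer_mod_group 4) f1 ?u = f1 c [^]\<^bsub>integer_mod_group 4\<^esub> k"
    using group.conj_word[OF group_integer_mod_group f1_closed w'c, where c = c and k = k]
      comm_group.conj_triv[OF abelian_integer_mod_group
        group.ev_closed[OF group_integer_mod_group f1_closed]
        group.int_pow_closed[OF group_integer_mod_group f1_closed]] by simp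
  have u2: "ev (integer_mod_group 2) f2 ?u = f2 c [^]\<^bsub>integer_mod_group 2\<^esub> k"
    using group.conj_word[OF group_integer_mod_group f2_closed w'c, where c = c and k = k]
      comm_group.conj_triv[OF abelian_integer_mod_group
        group.ev_closed[OF group_integer_mod_group f2_closed]
        group.int_pow_closed[OF group_integer_mod_group f2_closed]] by simp
  have g1: "ev (integer_mod_group 4) f1 ?gw = 0" by (simp add: ltr_def f1_def)
  have g2: "ev (integer_mod_group 2) f2 ?gw = 1" by (simp add: ltr_def f2_def)
  have A: "(k * f1 c) mod 4 = 0" using v1 u1 g1 by (simp add: int_pow_integer_mod_group)
  have B: "(k * f2 c) mod 2 = 1" using v2 u2 g2 by (simp add: int_pow_integer_mod_group)
  show False
  proof (cases c)
    case Gx then show False using A B by (simp add: f1_def f2_def) presburger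
  next
    case Gy then show False using A B by (simp add: f1_def f2_def) presburger
  next
    case Gz then show False using B by (simp add: f2_def)
  qed
qed

end

theorem lemma4p7:
  fixes n :: nat
  assumes "n \<ge> 3" and "odd n"
  shows "group (G4p7 n)
    \<and> order (G4p7 n) = 8 * n
    \<and> group.ord (G4p7 n) (gen4p7 n Gx) = 2
    \<and> group.ord (G4p7 n) (gen4p7 n Gy) = 4
    \<and> group.ord (G4p7 n) (gen4p7 n Gz) = 4 * n
    \<and> (\<exists>g \<in> carrier (G4p7 n).
          \<not> (\<exists>h \<in> carrier (G4p7 n). \<exists>s \<in> {gen4p7 n Gx, gen4p7 n Gy, gen4p7 n Gz}. \<exists>k :: int.
                g = h \<otimes>\<^bsub>G4p7 n\<^esub> (s [^]\<^bsub>G4p7 n\<^esub> k) \<otimes>\<^bsub>G4p7 n\<^esub> inv\<^bsub>G4p7 n\<^esub> h))"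
proof -
  let ?gw = "ev (presented_group (relators_4p7 n)) (pres_gen (relators_4p7 n)) [(Gy, False), (Gz, False), (Gz, False), (Gz, False)]"
  have "?gw \<in> carrier (presented_group (relators_4p7 n))" by (rule ev_pres_closed)
  then show ?thesis
    unfolding G4p7_def gen4p7_def
    using group_pres order_QQ[OF assms] ord_X[OF assms] ord_Y[OF assms] ord_Z[OF assms] not_conj[OF assms]
    by blast
qed

end
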